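(* Let $q\ge2$, $r\ge1$, $\rho\ge2$, $s\ge1$ be integers, $N=r+\rho-1$, $n=sN$, and $\mathcal{R}_{t+1}=\{tN+1,\dots,(t+1)N\}$ for $t=0,\dots,s-1$. Let $\mathcal{C}\subseteq Q^n$ ($|Q|=q$) be a code of cardinality $q^k$ with minimum distance $d$ such that $\mathcal{C}|_{\mathcal{R}_i}$ has minimum distance at least $\rho$ for all $i=1,\dots,s$. Write $d=tN+\partial$ with integers $t\ge0$ and $1\le\partial\le N$. Then $$k\le\begin{cases} r(s-t)+\rho-\partial & \text{if } \rho\le\partial,\\ r(s-t) & \text{if } \rho>\partial.\end{cases}$$
   Context: Minimum distance refers to Hamming distance; $\mathcal{C}|_{\mathcal{R}_i}$ is the projection of $\mathcal{C}$ onto the coordinates in $\mathcal{R}_i$. *)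

theory Defs
  imports Complex_Main "HOL-Library.FuncSet"
begin

text \<open>Words of length n over alphabet Q are extensional functions on the
coordinate set {1..n}, i.e. elements of PiE {1..n} (\<lambda>_. Q).\<close>

definition hdist :: "nat set \<Rightarrow> (nat \<Rightarrow> 'a) \<Rightarrow> (nat \<Rightarrow> 'a) \<Rightarrow> nat" where
  "hdist I x y = card {i \<in> I. x i \<noteq> y i}"

definition has_min_dist :: "nat set \<Rightarrow> (nat \<Rightarrow> 'a) set \<Rightarrow> nat \<Rightarrow> bool" where
  "has_min_dist I C d \<longleftrightarrow>
     (\<exists>x\<in>C. \<exists>y\<in>C. x \<noteq> y \<and> hdist I x y = d) \<and>
     (\<forall>x\<in>C. \<forall>y\<in>C. x \<noteq> y \<longrightarrow> d \<le> hdist I x y)"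

definition min_dist_ge :: "nat set \<Rightarrow> (nat \<Rightarrow> 'a) set \<Rightarrow> nat \<Rightarrow> bool" where
  "min_dist_ge I C d \<longleftrightarrow> (\<forall>x\<in>C. \<forall>y\<in>C. x \<noteq> y \<longrightarrow> d \<le> hdist I x y)"

definition proj :: "nat set \<Rightarrow> (nat \<Rightarrow> 'a) set \<Rightarrow> (nat \<Rightarrow> 'a) set" where
  "proj R C = (\<lambda>x. restrict x R) ` C"

definition block :: "nat \<Rightarrow> nat \<Rightarrow> nat set" where
  "block N i = {(i - 1) * N + 1 .. i * N}"

end

theory Submission
  imports Defs
begin

lemma decomp_nat:
  fixes j N :: nat assumes "N > 0" "j \<ge> 1"
  shows "j = ((j-1) div N) * N + (j-1) mod N + 1"
  using assms by (metis Suc_pred' div_mult_mod_eq le_add_diff_inverse2 less_one not_less add.commute)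

theorem mainTheorem7:
  fixes Q :: "'a set" and C :: "(nat \<Rightarrow> 'a) set"
    and q r \<rho> s N n d t \<delta> :: nat and k :: real
  assumes "q \<ge> 2" "r \<ge> 1" "\<rho> \<ge> 2" "s \<ge> 1"
    and "N = r + \<rho> - 1" "n = s * N"
    and "finite Q" "card Q = q"
    and "C \<subseteq> PiE {1..n} (\<lambda>_. Q)"
    and "real (card C) = real q powr k"
    and "has_min_dist {1..n} C d"
    and "\<forall>i\<in>{1..s}. min_dist_ge (block N i) (proj (block N i) C) \<rho>"
    and "d = t * N + \<delta>" "1 \<le> \<delta>" "\<delta> \<le> N"
  shows "k \<le> (if \<rho> \<le> \<delta>
               then real r * (real s - real t) + real \<rho> - real \<delta>
               else real r * (real s - real t))"
proof -
  note A = assms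
  have Npos: "N \<ge> 2" using A by simp
  have mind: "\<And>x y. x \<in> C \<Longrightarrow> y \<in> C \<Longrightarrow> x \<noteq> y \<Longrightarrow> d \<le> hdist {1..n} x y"
    using A(11) unfolding has_min_dist_def by blast
  obtain x0 y0 where "x0 \<in> C" "y0 \<in> C" "hdist {1..n} x0 y0 = d"
    using A(11) unfolding has_min_dist_def by blast
  then have "d \<le> n" unfolding hdist_def
    by (metis (no_types, lifting) card_mono finite_atLeastAtMost card_atLeastAtMost diff_Suc_1 mem_Collect_eq subsetI)
  then have "t * N < s * N" using A(6,13,14) by linarith
  then have tlt: "t < s" by simp
  have dpos: "d \<ge> 1" using A(13,14) by simp
  define S where "S = {j \<in> {d..n}. (j-1) mod N \<ge> \<rho> - 1}"
  have agree: "x = y" if xC: "x \<in> C" and yC: "y \<in> C" and eqS: "\<forall>j\<in>S. x j = y j" for x y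
  proof -
    have all: "x j = y j" if j: "j \<in> {d..n}" for j
    proof -
      define i where "i = (j-1) div N"
      define w where "w = (j-1) mod N"
      have jd: "j = i*N + w + 1" unfolding i_def w_def using decomp_nat[of N j] Npos j dpos by auto
      have wN: "w < N" unfolding w_def using Npos by simp
      have "i < s"
      proof (rule ccontr)
        assume "\<not> i < s" then have "s * N \<le> i * N" by simp
        moreover have "j \<le> s*N" using j A(6) by simp
      ultimately show False using jd by linarith
      qed
      show ?thesis
      proof (cases "w \<ge> \<rho> - 1")
        case True
        then have "j \<in> S" unfolding S_def using j w_def by simp
        then show ?thesis using eqS by blast
      next
        case False
        define Bk where "Bk = block N (i+1)"
        have Bk: "Bk = {i*N+1 .. i*N+N}" unfolding Bk_def block_def by (simp add: algebra_simps)
        have md: "min_dist_ge Bk (proj Bk C) \<rho>" using A(12) \<open>i < s\<close> unfolding Bk_def by auto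
        have upper: "x l = y l" if l: "l \<in> Bk" "l \<ge> i*N + \<rho>" for l
        proof -
          have "(i+1)*N \<le> s*N" using \<open>i<s\<close> by (simp del: mult_Suc)
          then have "l \<le> n" using l Bk A(6) by (simp add: algebra_simps)
          moreover have "l \<ge> d" using l jd j False by auto
          moreover have "(l-1) mod N = l - 1 - i*N"
          proof -
            have "l - 1 = (l - 1 - i*N) + i*N" using l Bk by auto
            moreover have "l - 1 - i*N < N" using l Bk by auto
            ultimately show ?thesis by (metis mod_less mod_mult_self1)
          qed
          moreover have "l - 1 - i*N \<ge> \<rho> - 1" using l by auto
          ultimately have "l \<in> S" unfolding S_def by auto
          then show ?thesis using eqS by blast
        qed
        have "restrict x Bk = restrict y Bk"
        proof (rule ccontr)
          assume ne: "restrict x Bk \<noteq> restrict y Bk"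
          have "restrict x Bk \<in> proj Bk C" "restrict y Bk \<in> proj Bk C"
            unfolding proj_def using xC yC by auto
          then have "\<rho> \<le> hdist Bk (restrict x Bk) (restrict y Bk)"
            using md ne unfolding min_dist_ge_def by blast
          also have "\<dots> = card {l \<in> Bk. x l \<noteq> y l}" unfolding hdist_def
            by (metis (no_types, lifting) restrict_apply')
          also have "\<dots> \<le> card {i*N+1 ..< i*N+\<rho>}"
          proof (rule card_mono)
            show "{l \<in> Bk. x l \<noteq> y l} \<subseteq> {i * N + 1..<i * N + \<rho>}"
              using upper Bk by fastforce
          qed simp
          also have "\<dots> = \<rho> - 1" by simp
          finally show False using A(3) by simp
        qed
        moreover have "j \<in> Bk" using Bk jd wN by simp
        ultimately show ?thesis by (metis restrict_apply')
      qed
    qed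
    show ?thesis
    proof (rule ccontr)
      assume ne: "x \<noteq> y"
      have "d \<le> hdist {1..n} x y" using mind xC yC ne by blast
      also have "\<dots> \<le> card {1..<d}" unfolding hdist_def
      proof (rule card_mono)
        show "{i \<in> {1..n}. x i \<noteq> y i} \<subseteq> {1..<d}"
        proof
          fix l assume "l \<in> {i \<in> {1..n}. x i \<noteq> y i}"
          then have "l \<in> {1..n}" "x l \<noteq> y l" by auto
          then show "l \<in> {1..<d}" using all[of l] by (cases "d \<le> l") auto
        qed
      qed simp
      also have "\<dots> < d" using dpos by simp
      finally show False by simp
    qed
  qed
  define m where "m = max \<delta> \<rho>"
  define Aset where "Aset = {t*N + m .. t*N + N}"
  define Bset where "Bset = (\<lambda>(a,b). (t+1+a)*N + \<rho> + b) ` ({0..<s-t-1} \<times> {0..<r})"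
  have SAB: "S \<subseteq> Aset \<union> Bset"
  proof
    fix j assume jS: "j \<in> S"
    define i where "i = (j-1) div N"
    define w where "w = (j-1) mod N"
    have j: "d \<le> j" "j \<le> n" "w \<ge> \<rho> - 1" using jS unfolding S_def w_def by auto
    have jd: "j = i*N + w + 1" unfolding i_def w_def using decomp_nat[of N j] Npos j dpos by auto
    have wN: "w < N" unfolding w_def using Npos by simp
    have "i < s"
    proof (rule ccontr)
      assume "\<not> i < s" then have "s * N \<le> i * N" by simp
      moreover have "j \<le> s*N" using j A(6) by simp
      ultimately show False using jd by linarith
    qed
    have "t \<le> i"
    proof (rule ccontr)
      assume "\<not> t \<le> i" then have "i+1 \<le> t" by simp
      then have "(i+1) * N \<le> t * N" by (rule mult_le_mono1)
      then have "i * N + N \<le> t * N" by (simp add: algebra_simps)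
      then show False using jd j A(13,14) wN by linarith
    qed
    show "j \<in> Aset \<union> Bset"
    proof (cases "i = t")
      case True
      then show ?thesis using jd j wN A(3,13) unfolding Aset_def m_def by auto
    next
      case False
      define a where "a = i - t - 1"
      define b where "b = w + 1 - \<rho>"
      have "j = (t+1+a)*N + \<rho> + b" using jd False \<open>t \<le> i\<close> j A(3) unfolding a_def b_def by auto
      moreover have "a < s - t - 1" using \<open>i<s\<close> False \<open>t\<le>i\<close> unfolding a_def by auto
      moreover have "b < r" using wN A(2,3,5) unfolding b_def by auto
      ultimately have "j \<in> Bset" unfolding Bset_def by force
      then show ?thesis by simp
    qed
  qed
  have cA: "card Aset = N + 1 - m" unfolding Aset_def by simp
  have cB: "card Bset \<le> (s-t-1)*r" unfolding Bset_def
    using card_image_le[of "{0..<s-t-1} \<times> {0..<r}"] by (simp add: card_cartesian_product)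
  have finS: "finite S" unfolding S_def by simp
  have cS: "card S \<le> (N + 1 - m) + (s-t-1)*r"
    using card_mono[OF _ SAB] card_Un_le[of Aset Bset] cA cB unfolding Aset_def Bset_def by simp
  have inj: "inj_on (\<lambda>x. restrict x S) C"
    by (rule inj_onI) (metis agree restrict_apply')
  have S1n: "S \<subseteq> {1..n}" unfolding S_def using dpos by auto
  have "(\<lambda>x. restrict x S) ` C \<subseteq> PiE S (\<lambda>_. Q)"
  proof
    fix z assume "z \<in> (\<lambda>x. restrict x S) ` C"
    then obtain x where x: "x \<in> C" "z = restrict x S" by blast
    then have "x \<in> PiE {1..n} (\<lambda>_. Q)" using A(9) by blast
    then show "z \<in> PiE S (\<lambda>_. Q)" using x S1n by (auto simp: PiE_iff)
  qed
  then have "card C \<le> card (PiE S (\<lambda>_. Q))"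
    using card_inj_on_le[OF inj] finS A(7) by (simp add: finite_PiE)
  also have "\<dots> = q ^ card S" using card_PiE[OF finS, of "\<lambda>_. Q"] A(8) by simp
  also have "\<dots> \<le> q ^ ((N + 1 - m) + (s-t-1)*r)" using cS A(1) by (simp add: power_increasing)
  finally have cC: "card C \<le> q ^ ((N + 1 - m) + (s-t-1)*r)" .
  have "real q powr k \<le> real q powr real ((N + 1 - m) + (s-t-1)*r)"
  proof -
    have "real (card C) \<le> real (q ^ ((N + 1 - m) + (s-t-1)*r))" using cC by linarith
    also have "\<dots> = real q powr real ((N + 1 - m) + (s-t-1)*r)"
      unfolding of_nat_power by (rule sym, rule powr_realpow) (use A(1) in simp)
    finally show ?thesis using A(10) by simp
  qed
  then have kle: "k \<le> real ((N + 1 - m) + (s-t-1)*r)" using A(1) by simp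
  obtain u where su: "s = t + 1 + u" using tlt less_iff_Suc_add by auto
  have stu: "s - t - 1 = u" using su by simp
  show ?thesis
  proof (cases "\<rho> \<le> \<delta>")
    case True
    have m: "N + 1 - m = r + \<rho> - \<delta>" using True A(3,5) unfolding m_def by simp
    have "real (r + \<rho> - \<delta>) = real r + real \<rho> - real \<delta>" using A(5,15) A(3) by (simp add: of_nat_diff)
    then have "real ((N + 1 - m) + (s-t-1)*r) = real r * (real s - real t) + real \<rho> - real \<delta>"
      unfolding m stu su by (simp add: algebra_simps)
    then show ?thesis using kle True by simp
  next
    case False
    have m: "N + 1 - m = r" using False A(2,3,5) unfolding m_def by simp
    have "real ((N + 1 - m) + (s-t-1)*r) = real r * (real s - real t)"
      unfolding m stu su by (simp add: algebra_simps)
    then show ?thesis using kle False by simp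
  qed
qed

end
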